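(* Let $\Omega=\mathbb T^2$, $\omega,\nu\in(0,1)$, $T>0$, and let $\vec u^o:\Omega\times[0,T]\to\mathbb R^2$ be a given smooth velocity field (in particular $\operatorname{div}\vec u^o\in L^1(0,T;L^\infty(\Omega))$). Let $(h_m,A_m)$ be a sufficiently regular (e.g. classical) solution on $[0,T]$ of the transport system $$\partial_t h_m+\operatorname{div}(h_m\vec u^o)=\mathcal S_{h_m,\omega,\nu},\qquad \partial_tA_m+\operatorname{div}(A_m\vec u^o)=\mathcal S_{A_m,\omega,\nu}+A_m\operatorname{div}\vec u^o\cdot\chi^\omega_{A_m},$$ with initial data $A_m(0)=A_{\rm in}$ satisfying $0\le A_{\rm in}\le1$. Then $0\le A_m(t)\le 1$ on $\Omega$ for all $t\in[0,T]$.
   Context: $\psi^+=\max\{\psi,0\}$, $\psi^-=\psi^+-\psi$. $f:\mathbb R\to\mathbb R$ is a bounded smooth function with $\underline f\le f\le\overline f$, $h_0>0$ a constant. For functions $h,A$: $$\chi^\nu_h=\frac{h^+}{h^++\nu},\qquad \mathcal S_{h,\omega,\nu}=\big[f(h^+/(A^++\omega))A+(1-A)f(0)\big]\chi^\nu_h,$$ $$\mathcal S_{A,\omega,\nu}=\frac{(f(0))^+}{h_0+\nu}(1-A)-\frac{A}{2h^++\nu}\cdot\frac{\sqrt{|\mathcal S_{h,\omega,\nu}|^2+\omega^2}-\mathcal S_{h,\omega,\nu}}{2},\qquad \chi^\omega_A=1-\frac{(1-A)^+}{(1-A)^++\omega}.$$ In the system, $\mathcal S_{h_m,\omega,\nu}$,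 $\mathcal S_{A_m,\omega,\nu}$, $\chi^\omega_{A_m}$ mean these expressions evaluated at $(h,A)=(h_m,A_m)$. *)

theory Defs
  imports "HOL-Analysis.Analysis"
begin

definition ppart :: "real \<Rightarrow> real" where
  "ppart x = max x 0"

definition chi_h :: "real \<Rightarrow> real \<Rightarrow> real" where
  "chi_h \<nu> h = ppart h / (ppart h + \<nu>)"

definition S_h :: "(real \<Rightarrow> real) \<Rightarrow> real \<Rightarrow> real \<Rightarrow> real \<Rightarrow> real \<Rightarrow> real" where
  "S_h f \<omega> \<nu> h A =
     (f (ppart h / (ppart A + \<omega>)) * A + (1 - A) * f 0) * chi_h \<nu> h"

definition S_A :: "(real \<Rightarrow> real) \<Rightarrow> real \<Rightarrow> real \<Rightarrow> real \<Rightarrow> real \<Rightarrow> real \<Rightarrow> real" where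
  "S_A f h0 \<omega> \<nu> h A =
     ppart (f 0) / (h0 + \<nu>) * (1 - A)
     - A / (2 * ppart h + \<nu>) *
       ((sqrt ((S_h f \<omega> \<nu> h A)\<^sup>2 + \<omega>\<^sup>2) - S_h f \<omega> \<nu> h A) / 2)"

definition chi_A :: "real \<Rightarrow> real \<Rightarrow> real" where
  "chi_A \<omega> A = 1 - ppart (1 - A) / (ppart (1 - A) + \<omega>)"

text \<open>Functions on the torus T^2 are represented as functions on R^2 that are
  1-periodic in both space variables.\<close>
definition periodic2 :: "(real \<Rightarrow> real \<Rightarrow> real \<Rightarrow> real) \<Rightarrow> bool" where
  "periodic2 F \<longleftrightarrow> (\<forall>x y t. F (x + 1) y t = F x y t \<and> F x (y + 1) t = F x y t)"

definition C1_slab :: "real \<Rightarrow> (real \<Rightarrow> real \<Rightarrow> real \<Rightarrow> real) \<Rightarrow> bool" where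
  "C1_slab T F \<longleftrightarrow> (\<exists>Fx Fy Ft.
     (\<forall>x y t. t \<in> {0..T} \<longrightarrow>
        ((\<lambda>s. F s y t) has_real_derivative Fx x y t) (at x) \<and>
        ((\<lambda>s. F x s t) has_real_derivative Fy x y t) (at y) \<and>
        ((\<lambda>s. F x y s) has_real_derivative Ft x y t) (at t within {0..T})) \<and>
     continuous_on (UNIV \<times> UNIV \<times> {0..T}) (\<lambda>(x, y, t). F x y t) \<and>
     continuous_on (UNIV \<times> UNIV \<times> {0..T}) (\<lambda>(x, y, t). Fx x y t) \<and>
     continuous_on (UNIV \<times> UNIV \<times> {0..T}) (\<lambda>(x, y, t). Fy x y t) \<and>
     continuous_on (UNIV \<times> UNIV \<times> {0..T}) (\<lambda>(x, y, t). Ft x y t))"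

definition dt :: "real \<Rightarrow> (real \<Rightarrow> real \<Rightarrow> real \<Rightarrow> real) \<Rightarrow> real \<Rightarrow> real \<Rightarrow> real \<Rightarrow> real" where
  "dt T F x y t = (THE D. ((\<lambda>s. F x y s) has_real_derivative D) (at t within {0..T}))"

definition div2 :: "(real \<Rightarrow> real \<Rightarrow> real \<Rightarrow> real) \<Rightarrow> (real \<Rightarrow> real \<Rightarrow> real \<Rightarrow> real)
                     \<Rightarrow> real \<Rightarrow> real \<Rightarrow> real \<Rightarrow> real" where
  "div2 P Q x y t = deriv (\<lambda>s. P s y t) x + deriv (\<lambda>s. Q x s t) y"

end

theory Submission
  imports Defs
begin

lemma uniq:
  assumes "T > 0" "t \<in> {0..T}" "((g::real\<Rightarrow>real) has_real_derivative D) (at t within {0..T})"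
   "(g has_real_derivative E) (at t within {0..T})"
  shows "D = E"
proof -
  have nb: "at t within {0..T} \<noteq> bot"
    using assms(1,2) by (simp add: trivial_limit_within)
  show ?thesis using assms(3,4) nb unfolding has_field_derivative_iff
    using tendsto_unique by blast
qed
lemma left_max:
  assumes "0 < s" "s \<le> T" "((g::real\<Rightarrow>real) has_real_derivative D) (at s within {0..T})"
   "\<forall>r\<in>{0..s}. g r \<le> g s"
  shows "D \<ge> 0"
proof -
  have "(g has_real_derivative D) (at s within {0..s})"
    using assms(3) by (rule has_field_derivative_subset) (use assms in auto)
  hence "(g has_real_derivative D) (at_left s)" using assms(1) by (simp add: at_within_Icc_at_left)
  hence L: "((\<lambda>y. (g y - g s) / (y - s)) \<longlongrightarrow> D) (at_left s)" by (simp add: has_field_derivative_iff)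
  have "eventually (\<lambda>y. y \<in> {0<..<s}) (at_left s)" using assms(1) by (rule eventually_at_left_real)
  hence "eventually (\<lambda>y. 0 \<le> (g y - g s) / (y - s)) (at_left s)"
    by eventually_elim (use assms(4) in \<open>auto intro!: divide_nonpos_neg\<close>)
  thus ?thesis using L by (intro tendsto_lowerbound) auto
qed
lemma per_int:
  assumes "periodic2 F" shows "F (x + of_int n) y t = F x y t \<and> F x (y + of_int n) t = F x y t"
proof (induction n arbitrary: x y rule: int_induct[where k=0])
  case base then show ?case by simp
next
  case (step1 i)
  have "F (x + of_int (i+1)) y t = F (x + of_int i) y t"
    using assms unfolding periodic2_def by (simp add: add.assoc[symmetric])
  moreover have "F x (y + of_int (i+1)) t = F x (y + of_int i) t"
    using assms unfolding periodic2_def by (simp add: add.assoc[symmetric])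
  ultimately show ?case using step1 by simp
next
  case (step2 i)
  have "F (x + of_int (i-1)) y t = F (x + of_int (i - 1) + 1) y t"
    using assms unfolding periodic2_def by metis
  also have "\<dots> = F (x + of_int i) y t" by (simp add: algebra_simps)
  finally have 1: "F (x + of_int (i-1)) y t = F (x + of_int i) y t" .
  have "F x (y + of_int (i-1)) t = F x (y + of_int (i - 1) + 1) t"
    using assms unfolding periodic2_def by metis
  also have "\<dots> = F x (y + of_int i) t" by (simp add: algebra_simps)
  finally have 2: "F x (y + of_int (i-1)) t = F x (y + of_int i) t" .
  show ?case using 1 2 step2 by simp
qed
lemma per_red:
  assumes "periodic2 F" shows "F (x - of_int (floor x)) (y - of_int (floor y)) t = F x y t"
proof -
  have "F (x - of_int (floor x)) (y - of_int (floor y)) t = F (x - of_int (floor x)) y t"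
    using per_int[OF assms, where x="x - of_int (floor x)" and y=y and n="- floor y" and t=t] by simp
  also have "\<dots> = F x y t" using per_int[OF assms, where x=x and y=y and n="- floor x" and t=t] by simp
  finally show ?thesis .
qed

lemma sqrt_gt: "(w::real) \<noteq> 0 \<Longrightarrow> sqrt (x\<^sup>2 + w\<^sup>2) - x > 0"
proof -
  assume w: "w \<noteq> 0"
  have "sqrt (x\<^sup>2) < sqrt (x\<^sup>2 + w\<^sup>2)" using w by (intro real_sqrt_less_mono) simp
  moreover have "x \<le> sqrt (x\<^sup>2)" by simp
  ultimately show ?thesis by linarith
qed
lemma SA_neg:
  assumes "a > 1" "\<omega> > 0" "\<nu> > 0" "h0 > 0"
  shows "S_A f h0 \<omega> \<nu> hh a < 0"
proof -
  let ?S = "S_h f \<omega> \<nu> hh a"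
  have p: "(sqrt (?S\<^sup>2 + \<omega>\<^sup>2) - ?S) / 2 > 0" using sqrt_gt[of \<omega> ?S] assms by simp
  have d: "2 * ppart hh + \<nu> > 0" using assms by (simp add: ppart_def)
  have "a / (2 * ppart hh + \<nu>) > 0" using d assms by simp
  hence 1: "a / (2 * ppart hh + \<nu>) * ((sqrt (?S\<^sup>2 + \<omega>\<^sup>2) - ?S) / 2) > 0" using p by (rule mult_pos_pos)
  have "ppart (f 0) / (h0 + \<nu>) \<ge> 0" using assms by (simp add: ppart_def)
  hence 2: "ppart (f 0) / (h0 + \<nu>) * (1 - a) \<le> 0" using assms by (intro mult_nonneg_nonpos) auto
  show ?thesis unfolding S_A_def using 1 2 by linarith
qed
lemma SA_pos:
  assumes "a < 0" "\<omega> > 0" "\<nu> > 0" "h0 > 0"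
  shows "S_A f h0 \<omega> \<nu> hh a > 0"
proof -
  let ?S = "S_h f \<omega> \<nu> hh a"
  have p: "(sqrt (?S\<^sup>2 + \<omega>\<^sup>2) - ?S) / 2 > 0" using sqrt_gt[of \<omega> ?S] assms by simp
  have d: "2 * ppart hh + \<nu> > 0" using assms by (simp add: ppart_def)
  have "a / (2 * ppart hh + \<nu>) < 0" using d assms by (simp add: divide_neg_pos)
  hence 1: "a / (2 * ppart hh + \<nu>) * ((sqrt (?S\<^sup>2 + \<omega>\<^sup>2) - ?S) / 2) < 0" using p
    by (rule mult_neg_pos)
  have "ppart (f 0) / (h0 + \<nu>) \<ge> 0" using assms by (simp add: ppart_def)
  hence 2: "ppart (f 0) / (h0 + \<nu>) * (1 - a) \<ge> 0" using assms by (intro mult_nonneg_nonneg) auto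
  show ?thesis unfolding S_A_def using 1 2 by linarith
qed
lemma chi1: "(a::real) \<ge> 1 \<Longrightarrow> chi_A \<omega> a = 1"
  by (simp add: chi_A_def ppart_def)
lemma chi_bound:
  assumes "a < 0" "\<bar>d\<bar> \<le> K" "(\<omega>::real) > 0"
  shows "a * d * (chi_A \<omega> a - 1) \<ge> K * a"
proof -
  define r where "r = (1 - a) / ((1 - a) + \<omega>)"
  have r: "0 \<le> r" "r \<le> 1" using assms unfolding r_def by auto
  have e: "chi_A \<omega> a - 1 = - r" using assms by (simp add: chi_A_def ppart_def r_def)
  have "a * d * (chi_A \<omega> a - 1) = (-a) * (d * r)" by (simp add: e)
  moreover have "d * r \<ge> - K"
  proof -
    have "\<bar>d * r\<bar> \<le> \<bar>d\<bar>" using r by (simp add: abs_mult mult_left_le)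
    thus ?thesis using assms by linarith
  qed
  ultimately have "a * d * (chi_A \<omega> a - 1) \<ge> (-a) * (-K)"
    using assms by (metis mult_left_mono neg_0_le_iff_le less_imp_le)
  thus ?thesis by (simp add: mult.commute)
qed

theorem mainTheorem2:
  fixes f :: "real \<Rightarrow> real" and h0 \<omega> \<nu> T :: real
    and u1 u2 h A :: "real \<Rightarrow> real \<Rightarrow> real \<Rightarrow> real"
    and A_in :: "real \<Rightarrow> real \<Rightarrow> real"
  assumes f_bdd: "bounded (range f)"
    and f_smooth: "\<forall>z. f differentiable (at z)"
    and h0_pos: "h0 > 0"
    and \<omega>: "0 < \<omega>" "\<omega> < 1"
    and \<nu>: "0 < \<nu>" "\<nu> < 1"
    and T_pos: "T > 0"
    and u_per: "periodic2 u1" "periodic2 u2"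
    and u_reg: "C1_slab T u1" "C1_slab T u2"
    and sol_per: "periodic2 h" "periodic2 A"
    and sol_reg: "C1_slab T h" "C1_slab T A"
    and eq_h: "\<forall>x y t. t \<in> {0..T} \<longrightarrow>
        dt T h x y t + div2 (\<lambda>x y t. h x y t * u1 x y t) (\<lambda>x y t. h x y t * u2 x y t) x y t
          = S_h f \<omega> \<nu> (h x y t) (A x y t)"
    and eq_A: "\<forall>x y t. t \<in> {0..T} \<longrightarrow>
        dt T A x y t + div2 (\<lambda>x y t. A x y t * u1 x y t) (\<lambda>x y t. A x y t * u2 x y t) x y t
          = S_A f h0 \<omega> \<nu> (h x y t) (A x y t)
            + A x y t * div2 u1 u2 x y t * chi_A \<omega> (A x y t)"
    and init: "\<forall>x y. A x y 0 = A_in x y"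
    and A_in_bounds: "\<forall>x y. 0 \<le> A_in x y \<and> A_in x y \<le> 1"
  shows "\<forall>x y t. t \<in> {0..T} \<longrightarrow> 0 \<le> A x y t \<and> A x y t \<le> 1"
proof -
  from sol_reg(2) obtain Ax Ay At where
    dA: "\<forall>x y t. t \<in> {0..T} \<longrightarrow>
        ((\<lambda>s. A s y t) has_real_derivative Ax x y t) (at x) \<and>
        ((\<lambda>s. A x s t) has_real_derivative Ay x y t) (at y) \<and>
        ((\<lambda>s. A x y s) has_real_derivative At x y t) (at t within {0..T})"
    and cA: "continuous_on (UNIV \<times> UNIV \<times> {0..T}) (\<lambda>(x, y, t). A x y t)"
    unfolding C1_slab_def by blast
  from u_reg(1) obtain U1x U1y U1t where
    d1: "\<forall>x y t. t \<in> {0..T} \<longrightarrow>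
        ((\<lambda>s. u1 s y t) has_real_derivative U1x x y t) (at x)"
    and c1: "continuous_on (UNIV \<times> UNIV \<times> {0..T}) (\<lambda>(x, y, t). U1x x y t)"
    unfolding C1_slab_def by blast
  from u_reg(2) obtain U2x U2y U2t where
    d2: "\<forall>x y t. t \<in> {0..T} \<longrightarrow>
        ((\<lambda>s. u2 x s t) has_real_derivative U2y x y t) (at y)"
    and c2: "continuous_on (UNIV \<times> UNIV \<times> {0..T}) (\<lambda>(x, y, t). U2y x y t)"
    unfolding C1_slab_def by blast
  have key: "At x y t + (Ax x y t * u1 x y t + U1x x y t * A x y t + (Ay x y t * u2 x y t + U2y x y t * A x y t))
       = S_A f h0 \<omega> \<nu> (h x y t) (A x y t) + A x y t * (U1x x y t + U2y x y t) * chi_A \<omega> (A x y t)"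
    if t: "t \<in> {0..T}" for x y t
  proof -
    have dt1: "((\<lambda>s. A x y s) has_real_derivative At x y t) (at t within {0..T})" using dA t by blast
    have e1: "dt T A x y t = At x y t" unfolding dt_def
      by (rule the_equality[where P="\<lambda>D. ((\<lambda>s. A x y s) has_real_derivative D) (at t within {0..T})", OF dt1])
         (use uniq[OF T_pos t _ dt1] in blast)
    have e2: "deriv (\<lambda>s. A s y t * u1 s y t) x = Ax x y t * u1 x y t + U1x x y t * A x y t"
      by (rule DERIV_imp_deriv, rule DERIV_mult) (use dA d1 t in blast)+
    have e3: "deriv (\<lambda>s. A x s t * u2 x s t) y = Ay x y t * u2 x y t + U2y x y t * A x y t"
      by (rule DERIV_imp_deriv, rule DERIV_mult) (use dA d2 t in blast)+
    have e4: "div2 u1 u2 x y t = U1x x y t + U2y x y t" unfolding div2_def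
      using DERIV_imp_deriv d1 d2 t by metis
    have q: "dt T A x y t + div2 (\<lambda>x y t. A x y t * u1 x y t) (\<lambda>x y t. A x y t * u2 x y t) x y t
          = S_A f h0 \<omega> \<nu> (h x y t) (A x y t) + A x y t * div2 u1 u2 x y t * chi_A \<omega> (A x y t)"
      using eq_A t by blast
    have q2: "div2 (\<lambda>x y t. A x y t * u1 x y t) (\<lambda>x y t. A x y t * u2 x y t) x y t
       = Ax x y t * u1 x y t + U1x x y t * A x y t + (Ay x y t * u2 x y t + U2y x y t * A x y t)"
      unfolding div2_def using e2 e3 by simp
    show ?thesis using q q2 e1 e4 by simp
  qed
  have fr: "F (frac x) (frac y) t = F x y t" if "periodic2 F" for F x y t
    using per_red[OF that] by (simp add: frac_def)
  have frb: "frac x \<in> {0..1}" for x by (simp add: frac_ge_0 frac_lt_1 less_imp_le)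
  have cdv: "continuous_on ({0..1} \<times> {0..1} \<times> {0..T})
      (\<lambda>z. \<bar>(\<lambda>(x, y, t). U1x x y t) z + (\<lambda>(x, y, t). U2y x y t) z\<bar>)"
    by (intro continuous_intros continuous_on_subset[OF c1] continuous_on_subset[OF c2]) auto
  obtain zK where "zK \<in> {0..1} \<times> {0..1} \<times> {0..T}" and zK: "\<forall>w \<in> {0..1} \<times> {0..1} \<times> {0..T}.
      \<bar>(\<lambda>(x, y, t). U1x x y t) w + (\<lambda>(x, y, t). U2y x y t) w\<bar>
      \<le> \<bar>(\<lambda>(x, y, t). U1x x y t) zK + (\<lambda>(x, y, t). U2y x y t) zK\<bar>"
  proof -
    have "compact ({0..1::real} \<times> {0..1::real} \<times> {0..T})" by (intro compact_Times) auto
    moreover have "({0..1::real} \<times> {0..1::real} \<times> {0..T}) \<noteq> {}" using T_pos by auto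
    ultimately show ?thesis using continuous_attains_sup[OF _ _ cdv] that by blast
  qed
  define K where "K = \<bar>(\<lambda>(x, y, t). U1x x y t) zK + (\<lambda>(x, y, t). U2y x y t) zK\<bar>"
  have Kb: "\<bar>U1x x y t + U2y x y t\<bar> \<le> K" if "x \<in> {0..1}" "y \<in> {0..1}" "t \<in> {0..T}" for x y t
    using zK that unfolding K_def by fastforce
  show ?thesis
  proof (intro allI impI conjI)
    fix x0 y0 t1 assume t1: "t1 \<in> {0..T}"
    define S where "S = {0..1::real} \<times> {0..1::real} \<times> {0..t1}"
    have cS: "compact S" unfolding S_def by (intro compact_Times) auto
    have nS: "S \<noteq> {}" using t1 unfolding S_def by auto
    have mS: "(frac x, frac y, t) \<in> S" if "t \<in> {0..t1}" for x y t
      using that unfolding S_def by (auto simp: frac_ge_0 frac_lt_1 less_imp_le)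
    have sub: "S \<subseteq> UNIV \<times> UNIV \<times> {0..T}" using t1 unfolding S_def by auto
    show "0 \<le> A x0 y0 t1"
    proof (rule ccontr)
      assume neg: "\<not> 0 \<le> A x0 y0 t1"
      define B where "B = (\<lambda>(x, y, t). exp (- K * t) * A x y t)"
      have cB: "continuous_on S B" unfolding B_def
        using continuous_on_subset[OF cA sub]
        by (auto intro!: continuous_intros simp: case_prod_unfold)
      obtain z where zS: "z \<in> S" and zmin: "\<forall>w\<in>S. B z \<le> B w"
        using continuous_attains_inf[OF cS nS cB] by blast
      obtain p q s where z: "z = (p, q, s)" by (cases z) auto
      have pqs: "p \<in> {0..1}" "q \<in> {0..1}" "s \<in> {0..t1}" using zS z S_def by auto
      have sT: "s \<in> {0..T}" using pqs t1 by auto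
      have "B z \<le> B (frac x0, frac y0, t1)" using zmin mS[of t1] t1 by auto
      also have "\<dots> = exp (- K * t1) * A x0 y0 t1" unfolding B_def using fr[OF sol_per(2)] by simp
      also have "\<dots> < 0" using neg by (simp add: mult_pos_neg)
      finally have Bneg: "exp (- K * s) * A p q s < 0" unfolding B_def z by simp
      hence aneg: "A p q s < 0" by (simp add: mult_less_0_iff)
      have s0: "s > 0"
      proof (rule ccontr)
        assume "\<not> s > 0" hence "s = 0" using pqs by auto
        thus False using aneg init A_in_bounds by (metis not_le)
      qed
      have spmin: "A p q s \<le> A x y s" for x y
      proof -
        have "B z \<le> B (frac x, frac y, s)" using zmin mS[of s] pqs by auto
        hence "exp (- K * s) * A p q s \<le> exp (- K * s) * A (frac x) (frac y) s"
          unfolding B_def z by simp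
        hence "A p q s \<le> A (frac x) (frac y) s" by simp
        thus ?thesis using fr[OF sol_per(2)] by simp
      qed
      have ax: "Ax p q s = 0"
        by (rule DERIV_local_min[of "\<lambda>r. A r q s" _ _ 1]) (use dA sT spmin in auto)
      have ay: "Ay p q s = 0"
        by (rule DERIV_local_min[of "\<lambda>r. A p r s" _ _ 1]) (use dA sT spmin in auto)
      have dB: "((\<lambda>r. - (exp (- K * r) * A p q r)) has_real_derivative
          - (exp (- K * s) * At p q s + (- K) * exp (- K * s) * A p q s)) (at s within {0..T})"
        using dA sT by (auto intro!: derivative_eq_intros)
      have "- (exp (- K * s) * At p q s + (- K) * exp (- K * s) * A p q s) \<ge> 0"
      proof (rule left_max[OF s0 _ dB])
        show "s \<le> T" using sT by auto
        show "\<forall>r\<in>{0..s}. - (exp (- K * r) * A p q r) \<le> - (exp (- K * s) * A p q s)"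
        proof
          fix r assume "r \<in> {0..s}"
          hence "(p, q, r) \<in> S" using pqs unfolding S_def by auto
          thus "- (exp (- K * r) * A p q r) \<le> - (exp (- K * s) * A p q s)"
            using zmin unfolding B_def z by auto
        qed
      qed
      hence "exp (- K * s) * (At p q s - K * A p q s) \<le> 0" by (simp add: algebra_simps)
      hence At1: "At p q s \<le> K * A p q s" by (simp add: mult_le_0_iff)
      have kk: "At p q s = S_A f h0 \<omega> \<nu> (h p q s) (A p q s)
          + A p q s * (U1x p q s + U2y p q s) * (chi_A \<omega> (A p q s) - 1)"
        using key[OF sT, of p q] ax ay by (simp add: algebra_simps)
      have "S_A f h0 \<omega> \<nu> (h p q s) (A p q s) > 0" using SA_pos aneg \<omega> \<nu> h0_pos by blast
      moreover have "A p q s * (U1x p q s + U2y p q s) * (chi_A \<omega> (A p q s) - 1) \<ge> K * A p q s"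
        using chi_bound[OF aneg Kb[OF pqs(1,2) sT] \<omega>(1)] .
      ultimately show False using At1 kk by linarith
    qed
    show "A x0 y0 t1 \<le> 1"
    proof (rule ccontr)
      assume big: "\<not> A x0 y0 t1 \<le> 1"
      define B where "B = (\<lambda>(x, y, t). A x y t)"
      have cB: "continuous_on S B" unfolding B_def using continuous_on_subset[OF cA sub] .
      obtain z where zS: "z \<in> S" and zmax: "\<forall>w\<in>S. B w \<le> B z"
        using continuous_attains_sup[OF cS nS cB] by blast
      obtain p q s where z: "z = (p, q, s)" by (cases z) auto
      have pqs: "p \<in> {0..1}" "q \<in> {0..1}" "s \<in> {0..t1}" using zS z S_def by auto
      have sT: "s \<in> {0..T}" using pqs t1 by auto
      have "B (frac x0, frac y0, t1) \<le> B z" using zmax mS[of t1] t1 by auto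
      hence abig: "A p q s > 1" using big fr[OF sol_per(2)] unfolding B_def z by simp
      have s0: "s > 0"
      proof (rule ccontr)
        assume "\<not> s > 0" hence "s = 0" using pqs by auto
        thus False using abig init A_in_bounds by (metis not_le)
      qed
      have spmax: "A x y s \<le> A p q s" for x y
      proof -
        have "B (frac x, frac y, s) \<le> B z" using zmax mS[of s] pqs by auto
        thus ?thesis using fr[OF sol_per(2)] unfolding B_def z by simp
      qed
      have ax: "Ax p q s = 0"
        by (rule DERIV_local_max[of "\<lambda>r. A r q s" _ _ 1]) (use dA sT spmax in auto)
      have ay: "Ay p q s = 0"
        by (rule DERIV_local_max[of "\<lambda>r. A p r s" _ _ 1]) (use dA sT spmax in auto)
      have "At p q s \<ge> 0"
      proof (rule left_max[OF s0 _ _])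
        show "s \<le> T" using sT by auto
        show "((\<lambda>r. A p q r) has_real_derivative At p q s) (at s within {0..T})" using dA sT by blast
        show "\<forall>r\<in>{0..s}. A p q r \<le> A p q s"
        proof
          fix r assume "r \<in> {0..s}"
          hence "(p, q, r) \<in> S" using pqs unfolding S_def by auto
          thus "A p q r \<le> A p q s" using zmax unfolding B_def z by auto
        qed
      qed
      moreover have "At p q s = S_A f h0 \<omega> \<nu> (h p q s) (A p q s)"
        using key[OF sT, of p q] ax ay chi1[of "A p q s" \<omega>] abig by (simp add: algebra_simps)
      moreover have "S_A f h0 \<omega> \<nu> (h p q s) (A p q s) < 0" using SA_neg abig \<omega> \<nu> h0_pos by blast
      ultimately show False by linarith
    qed
  qed
qed

end
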